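(* Let $S$ be an inductive $E$-demigroup with associated function $\cdot:S\times E\to E$, and let $P=C^d_E(S)$. Then $P$ becomes a left restriction semigroup under $$(e,s)(f,t)=\big(e\wedge(s\cdot f),\,(e\wedge(s\cdot f))st\big),\qquad D((e,s))=(e,e),$$ for all $(e,s),(f,t)\in P$ (this is the induced left restriction semigroup of the inductive constellation $P$), and in it $(e,s)\le(f,t)$ in the natural order if and only if $e\le_r f$ and $s=et$.
   Context: For a semigroup $S$, $E(S)$ is its set of idempotents; for $e,f\in E(S)$, $e\le_r f$ iff $e=ef$. $E\subseteq E(S)$ is right pre-reduced if $e=ef$ and $f=fe$ imply $e=f$ for $e,f\in E$. A demigroup is a semigroup $S$ with unary $d$ such that $d(x)\in E(S)$, $d(x)x=x$, $d(xy)=d(xd(y))$ for all $x,y$. For $E\subseteq E(S)$, $S$ is an $E$-demigroup if $d(s)\in E$ for all $s$ and $ed(e)=e$ for all $e\in E$. It is inductive if $E$ is right pre-reduced, $(E,\le_r)$ is a meet-semilattice with meet $\wedge$, and there is a function $\cdot:S\times E\to E$ with (I1) for all $t\in S$, $e\in E$, $s\in S$: ($ste=st$ and $sd(t)=s$) iff $s(t\cdot e)=s$; (I2) for $s\in S$, $e,f\in E$: $se=sf=s$ implies $s(e\wedge f)=s$. $C^d_E(S)=\{(e,s)\in E\times S\mid es=s,\ d(e)=d(s)\}$; as a constellation its partial product is $(e,s)\circ(f,t)=(e,st)$, defined exactly when $sf=s$, and $D((e,s))=(e,e)$. A left restriction semigroup is a semigroup with unary operation $D$ satisfying $D(x)x=x$,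 $D(x)D(y)=D(y)D(x)$, $D(D(x)y)=D(x)D(y)$ and $xD(y)=D(xy)x$; its natural order is $s\le t$ iff $s=D(s)t$. *)

theory Defs
  imports Main
begin

text \<open>Semigroups are modelled by the type class semigroup_mult; S is the whole type.\<close>

definition idempotents :: "'a::semigroup_mult set" where
  "idempotents = {e. e * e = e}"

definition le_r :: "'a::semigroup_mult \<Rightarrow> 'a \<Rightarrow> bool" where
  "le_r e f \<longleftrightarrow> e = e * f"

definition right_pre_reduced :: "'a::semigroup_mult set \<Rightarrow> bool" where
  "right_pre_reduced E \<longleftrightarrow> E \<subseteq> idempotents \<and>
     (\<forall>e\<in>E. \<forall>f\<in>E. e = e * f \<and> f = f * e \<longrightarrow> e = f)"

definition demigroup :: "('a::semigroup_mult \<Rightarrow> 'a) \<Rightarrow> bool" where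
  "demigroup d \<longleftrightarrow> (\<forall>x. d x \<in> idempotents \<and> d x * x = x) \<and>
     (\<forall>x y. d (x * y) = d (x * d y))"

definition E_demigroup :: "('a::semigroup_mult \<Rightarrow> 'a) \<Rightarrow> 'a set \<Rightarrow> bool" where
  "E_demigroup d E \<longleftrightarrow> demigroup d \<and> E \<subseteq> idempotents \<and>
     (\<forall>s. d s \<in> E) \<and> (\<forall>e\<in>E. e * d e = e)"

definition is_meet_semilattice :: "'a::semigroup_mult set \<Rightarrow> ('a \<Rightarrow> 'a \<Rightarrow> 'a) \<Rightarrow> bool" where
  "is_meet_semilattice E meet \<longleftrightarrow>
     (\<forall>e\<in>E. \<forall>f\<in>E. meet e f \<in> E \<and> le_r (meet e f) e \<and> le_r (meet e f) f \<and>
        (\<forall>g\<in>E. le_r g e \<and> le_r g f \<longrightarrow> le_r g (meet e f)))"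

definition inductive_E_demigroup ::
  "('a::semigroup_mult \<Rightarrow> 'a) \<Rightarrow> 'a set \<Rightarrow> ('a \<Rightarrow> 'a \<Rightarrow> 'a) \<Rightarrow> ('a \<Rightarrow> 'a \<Rightarrow> 'a) \<Rightarrow> bool" where
  "inductive_E_demigroup d E meet dot \<longleftrightarrow>
     E_demigroup d E \<and> right_pre_reduced E \<and> is_meet_semilattice E meet \<and>
     (\<forall>s e. e \<in> E \<longrightarrow> dot s e \<in> E) \<and>
     (\<forall>t e s. e \<in> E \<longrightarrow> ((s * t * e = s * t \<and> s * d t = s) \<longleftrightarrow> s * dot t e = s)) \<and>
     (\<forall>s e f. e \<in> E \<longrightarrow> f \<in> E \<longrightarrow> s * e = s \<longrightarrow> s * f = s \<longrightarrow> s * meet e f = s)"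

definition CdE :: "('a::semigroup_mult \<Rightarrow> 'a) \<Rightarrow> 'a set \<Rightarrow> ('a \<times> 'a) set" where
  "CdE d E = {(e, s). e \<in> E \<and> e * s = s \<and> d e = d s}"

definition P_mult :: "('a::semigroup_mult \<Rightarrow> 'a \<Rightarrow> 'a) \<Rightarrow> ('a \<Rightarrow> 'a \<Rightarrow> 'a) \<Rightarrow>
    'a \<times> 'a \<Rightarrow> 'a \<times> 'a \<Rightarrow> 'a \<times> 'a" where
  "P_mult meet dot x y = (case x of (e, s) \<Rightarrow> case y of (f, t) \<Rightarrow>
      (meet e (dot s f), meet e (dot s f) * s * t))"

definition P_D :: "'a \<times> 'a \<Rightarrow> 'a \<times> 'a" where
  "P_D x = (fst x, fst x)"

definition left_restriction_semigroup ::
  "'b set \<Rightarrow> ('b \<Rightarrow> 'b \<Rightarrow> 'b) \<Rightarrow> ('b \<Rightarrow> 'b) \<Rightarrow> bool" where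
  "left_restriction_semigroup A mul D \<longleftrightarrow>
     (\<forall>x\<in>A. \<forall>y\<in>A. mul x y \<in> A) \<and> (\<forall>x\<in>A. D x \<in> A) \<and>
     (\<forall>x\<in>A. \<forall>y\<in>A. \<forall>z\<in>A. mul (mul x y) z = mul x (mul y z)) \<and>
     (\<forall>x\<in>A. mul (D x) x = x) \<and>
     (\<forall>x\<in>A. \<forall>y\<in>A. mul (D x) (D y) = mul (D y) (D x)) \<and>
     (\<forall>x\<in>A. \<forall>y\<in>A. D (mul (D x) y) = mul (D x) (D y)) \<and>
     (\<forall>x\<in>A. \<forall>y\<in>A. mul x (D y) = mul (D (mul x y)) x)"

definition lr_le :: "('b \<Rightarrow> 'b \<Rightarrow> 'b) \<Rightarrow> ('b \<Rightarrow> 'b) \<Rightarrow> 'b \<Rightarrow> 'b \<Rightarrow> bool" where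
  "lr_le mul D x y \<longleftrightarrow> x = mul (D x) y"

end

theory Submission
  imports Defs
begin

locale indE =
  fixes d :: "'a::semigroup_mult \<Rightarrow> 'a" and E :: "'a set"
    and meet :: "'a \<Rightarrow> 'a \<Rightarrow> 'a" and dot :: "'a \<Rightarrow> 'a \<Rightarrow> 'a"
  assumes ind: "inductive_E_demigroup d E meet dot"
begin

lemma idem: "e \<in> E \<Longrightarrow> e * e = e"
  using ind unfolding inductive_E_demigroup_def E_demigroup_def idempotents_def by auto
lemma dE: "d s \<in> E"
  using ind unfolding inductive_E_demigroup_def E_demigroup_def by auto
lemma dx: "d x * x = x"
  using ind unfolding inductive_E_demigroup_def E_demigroup_def demigroup_def by auto
lemma dmul: "d (x * y) = d (x * d y)"
  using ind unfolding inductive_E_demigroup_def E_demigroup_def demigroup_def by auto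
lemma eDe: "e \<in> E \<Longrightarrow> e * d e = e"
  using ind unfolding inductive_E_demigroup_def E_demigroup_def by auto
lemma asym: "e \<in> E \<Longrightarrow> f \<in> E \<Longrightarrow> e = e * f \<Longrightarrow> f = f * e \<Longrightarrow> e = f"
  using ind unfolding inductive_E_demigroup_def right_pre_reduced_def by auto
lemma meetE: "e \<in> E \<Longrightarrow> f \<in> E \<Longrightarrow> meet e f \<in> E"
  using ind unfolding inductive_E_demigroup_def is_meet_semilattice_def by auto
lemma meet1: "e \<in> E \<Longrightarrow> f \<in> E \<Longrightarrow> meet e f * e = meet e f"
  using ind unfolding inductive_E_demigroup_def is_meet_semilattice_def le_r_def by metis
lemma meet2: "e \<in> E \<Longrightarrow> f \<in> E \<Longrightarrow> meet e f * f = meet e f"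
  using ind unfolding inductive_E_demigroup_def is_meet_semilattice_def le_r_def by metis
lemma dotE: "e \<in> E \<Longrightarrow> dot s e \<in> E"
  using ind unfolding inductive_E_demigroup_def by auto
lemma I1: "e \<in> E \<Longrightarrow> (x * t * e = x * t \<and> x * d t = x) \<longleftrightarrow> x * dot t e = x"
  using ind unfolding inductive_E_demigroup_def by auto
lemma I2: "e \<in> E \<Longrightarrow> f \<in> E \<Longrightarrow> x * e = x \<Longrightarrow> x * f = x \<Longrightarrow> x * meet e f = x"
  using ind unfolding inductive_E_demigroup_def by auto

lemma meet_char: "e \<in> E \<Longrightarrow> f \<in> E \<Longrightarrow> x * meet e f = x \<longleftrightarrow> x * e = x \<and> x * f = x"
proof
  assume a: "e \<in> E" "f \<in> E" "x * meet e f = x"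
  have 1: "x * e = x" using a meet1[OF a(1,2)] by (metis mult.assoc)
  have "x * f = x" using a meet2[OF a(1,2)] by (metis mult.assoc)
  then show "x * e = x \<and> x * f = x" using 1 by simp
next
  assume "e \<in> E" "f \<in> E" "x * e = x \<and> x * f = x"
  then show "x * meet e f = x" using I2 by blast
qed

lemma ext_eq: "a \<in> E \<Longrightarrow> b \<in> E \<Longrightarrow> (\<And>x. x \<in> E \<Longrightarrow> x * a = x \<longleftrightarrow> x * b = x) \<Longrightarrow> a = b"
  using asym idem by metis

lemma meet_eq: "e \<in> E \<Longrightarrow> f \<in> E \<Longrightarrow> e * f = e \<Longrightarrow> meet e f = e"
  by (rule ext_eq) (auto simp: meetE meet_char, metis mult.assoc)

lemma meet_comm: "e \<in> E \<Longrightarrow> f \<in> E \<Longrightarrow> meet e f = meet f e"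
  by (rule ext_eq) (auto simp: meetE meet_char)

lemma pfc: "e \<in> E \<Longrightarrow> f \<in> E \<Longrightarrow>
   x * meet e (dot s f) = x \<longleftrightarrow> x * e = x \<and> x * s * f = x * s \<and> x * d s = x"
  using meet_char[OF _ dotE] I1 by blast

lemma meet_dot_self: assumes "e \<in> E" "f \<in> E" shows "meet e (dot e f) = meet e f"
proof (rule ext_eq)
  fix x assume "x \<in> E"
  show "x * meet e (dot e f) = x \<longleftrightarrow> x * meet e f = x"
  proof
    assume "x * meet e (dot e f) = x"
    then have "x * e = x \<and> x * e * f = x * e" using pfc assms by blast
    then show "x * meet e f = x" using meet_char assms by auto
  next
    assume "x * meet e f = x"
    then have h: "x * e = x" "x * f = x" using meet_char assms by auto
    have "x * d e = x" using h eDe[OF assms(1)] by (metis mult.assoc)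
    then show "x * meet e (dot e f) = x" using pfc assms h by auto
  qed
qed (use assms meetE dotE in auto)

definition P where "P = CdE d E"

lemma Pmem: "(e, s) \<in> P \<longleftrightarrow> e \<in> E \<and> e * s = s \<and> d e = d s"
  by (simp add: P_def CdE_def)

lemma g_props: assumes "(e, s) \<in> P" "(f, t) \<in> P"
  shows "meet e (dot s f) * s * f = meet e (dot s f) * s"
    "meet e (dot s f) * d s = meet e (dot s f)"
    "d (meet e (dot s f) * s * t) = d (meet e (dot s f))"
proof -
  let ?g = "meet e (dot s f)"
  have E: "e \<in> E" "f \<in> E" using assms Pmem by auto
  have gE: "?g \<in> E" using E meetE dotE by auto
  have "?g * ?g = ?g" using idem gE by simp
  then have h: "?g * e = ?g \<and> ?g * s * f = ?g * s \<and> ?g * d s = ?g" using pfc E by blast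
  then show "?g * s * f = ?g * s" "?g * d s = ?g" by auto
  have ft: "f * t = t" "d f = d t" "f * d f = f" using assms Pmem eDe E by metis+
  have "d (?g * s * t) = d (?g * s * f * t)" using h ft by (metis mult.assoc)
  also have "\<dots> = d (?g * s * f * d t)" using dmul by simp
  also have "\<dots> = d (?g * s * f)" using ft by (simp add: mult.assoc)
  also have "\<dots> = d (?g * d s)" using h dmul by metis
  also have "\<dots> = d ?g" using h by simp
  finally show "d (?g * s * t) = d ?g" .
qed

lemma closed: assumes "x \<in> P" "y \<in> P" shows "P_mult meet dot x y \<in> P"
proof -
  obtain e s f t where xy: "x = (e, s)" "y = (f, t)" by fastforce
  let ?g = "meet e (dot s f)"
  have E: "e \<in> E" "f \<in> E" using assms xy Pmem by auto
  have gE: "?g \<in> E" using E meetE dotE by auto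
  have "?g * (?g * s * t) = ?g * s * t" using idem[OF gE] by (metis mult.assoc)
  then show ?thesis using xy g_props(3)[of e s f t] assms gE
    by (auto simp: Pmem P_mult_def)
qed

lemma DD: "e \<in> E \<Longrightarrow> f \<in> E \<Longrightarrow> P_mult meet dot (e, e) (f, f) = (meet e f, meet e f)"
  using meet_dot_self meet1 meet2 meetE by (simp add: P_mult_def)

lemma key: assumes "(f, t) \<in> P" "h \<in> E"
  shows "y * meet f (dot t h) = y \<longleftrightarrow> y * f = y \<and> y * t * h = y * t"
proof -
  have ft: "f \<in> E" "f * t = t" "d f = d t" "f * d f = f" using assms Pmem eDe by metis+
  have "y * f = y \<Longrightarrow> y * d t = y" using ft by (metis mult.assoc)
  then show ?thesis using pfc[OF ft(1) assms(2), of y t] by auto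
qed

lemma assoc: assumes "x \<in> P" "y \<in> P" "z \<in> P"
  shows "P_mult meet dot (P_mult meet dot x y) z = P_mult meet dot x (P_mult meet dot y z)"
proof -
  obtain e s f t h u where xy: "x = (e, s)" "y = (f, t)" "z = (h, u)" by (metis prod.exhaust)
  have E: "e \<in> E" "f \<in> E" "h \<in> E" using assms xy Pmem by auto
  define g where "g = meet e (dot s f)"
  define k where "k = meet g (dot (g * s * t) h)"
  define m where "m = meet f (dot t h)"
  define n where "n = meet e (dot s m)"
  have gE: "g \<in> E" using E meetE dotE g_def by auto
  have mE: "m \<in> E" using E meetE dotE m_def by auto
  have kE: "k \<in> E" using gE E meetE dotE k_def by auto
  have nE: "n \<in> E" using mE E meetE dotE n_def by auto
  have dg: "d (g * s * t) = d g" using g_props(3) assms xy g_def by blast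
  have kc: "w * k = w \<longleftrightarrow> w * e = w \<and> w * s * f = w * s \<and> w * d s = w \<and> w * s * t * h = w * s * t" for w
  proof -
    have "w * k = w \<longleftrightarrow> w * g = w \<and> w * (g * s * t) * h = w * (g * s * t) \<and> w * d (g * s * t) = w"
      unfolding k_def using pfc[OF gE E(3)] by blast
    also have "\<dots> \<longleftrightarrow> w * g = w \<and> w * s * t * h = w * s * t"
    proof -
      have "w * g = w \<Longrightarrow> w * (g * s * t) = w * s * t" by (metis mult.assoc)
      moreover have "w * g = w \<Longrightarrow> w * d (g * s * t) = w" using dg eDe[OF gE] by (metis mult.assoc)
      ultimately show ?thesis by auto
    qed
    also have "\<dots> \<longleftrightarrow> w * e = w \<and> w * s * f = w * s \<and> w * d s = w \<and> w * s * t * h = w * s * t"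
      unfolding g_def using pfc[OF E(1,2)] by blast
    finally show ?thesis .
  qed
  have nc: "w * n = w \<longleftrightarrow> w * e = w \<and> w * s * f = w * s \<and> w * d s = w \<and> w * s * t * h = w * s * t" for w
  proof -
    have "w * n = w \<longleftrightarrow> w * e = w \<and> w * s * m = w * s \<and> w * d s = w"
      unfolding n_def using pfc[OF E(1) mE] by blast
    moreover have "w * s * m = w * s \<longleftrightarrow> w * s * f = w * s \<and> w * s * t * h = w * s * t"
      unfolding m_def using key[of f t h "w * s"] assms xy E by auto
    ultimately show ?thesis by auto
  qed
  have kn: "k = n" by (rule ext_eq[OF kE nE]) (simp add: kc nc)
  have "k * k = k" using idem kE by simp
  then have kk: "k * g = k" "k * s * t * h = k * s * t" using kc[of k] pfc[OF E(1,2), of k s]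
    g_def by (auto simp: k_def meet_char[OF gE dotE[OF E(3)]])
  have "n * n = n" using idem nE by simp
  then have nn: "n * s * m = n * s" using nc[of n] unfolding n_def using pfc[OF E(1) mE] by blast
  have 1: "P_mult meet dot (P_mult meet dot x y) z = (k, k * (g * s * t) * u)"
    by (simp add: xy P_mult_def g_def k_def)
  have 2: "P_mult meet dot x (P_mult meet dot y z) = (n, n * s * (m * t * u))"
    by (simp add: xy P_mult_def m_def n_def)
  have "k * (g * s * t) * u = k * s * t * u" using kk by (metis mult.assoc)
  moreover have "n * s * (m * t * u) = n * s * t * u" using nn by (metis mult.assoc)
  ultimately show ?thesis using 1 2 kn by simp
qed

lemma Dx: "x \<in> P \<Longrightarrow> P_mult meet dot (P_D x) x = x"
proof -
  assume a: "x \<in> P"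
  obtain e s where x: "x = (e, s)" by fastforce
  have E: "e \<in> E" "e * s = s" using a x Pmem by auto
  have "meet e (dot e e) = e" using meet_dot_self[OF E(1) E(1)] meet_eq[OF E(1) E(1)] idem[OF E(1)] by simp
  then show ?thesis using x E idem[OF E(1)] by (simp add: P_mult_def P_D_def)
qed

lemma DDc: "x \<in> P \<Longrightarrow> y \<in> P \<Longrightarrow> P_mult meet dot (P_D x) (P_D y) = P_mult meet dot (P_D y) (P_D x)"
proof -
  assume a: "x \<in> P" "y \<in> P"
  obtain e s f t where xy: "x = (e, s)" "y = (f, t)" by fastforce
  have E: "e \<in> E" "f \<in> E" using a xy Pmem by auto
  show ?thesis using xy DD[OF E] DD[OF E(2) E(1)] meet_comm[OF E] by (simp add: P_D_def)
qed

lemma DDy: "x \<in> P \<Longrightarrow> y \<in> P \<Longrightarrow> P_D (P_mult meet dot (P_D x) y) = P_mult meet dot (P_D x) (P_D y)"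
proof -
  assume a: "x \<in> P" "y \<in> P"
  obtain e s f t where xy: "x = (e, s)" "y = (f, t)" by fastforce
  have E: "e \<in> E" "f \<in> E" using a xy Pmem by auto
  show ?thesis using xy DD[OF E] meet_dot_self[OF E] by (simp add: P_mult_def P_D_def)
qed

lemma xDy: "x \<in> P \<Longrightarrow> y \<in> P \<Longrightarrow> P_mult meet dot x (P_D y) = P_mult meet dot (P_D (P_mult meet dot x y)) x"
proof -
  assume a: "x \<in> P" "y \<in> P"
  obtain e s f t where xy: "x = (e, s)" "y = (f, t)" by fastforce
  have E: "e \<in> E" "f \<in> E" using a xy Pmem by auto
  define g where "g = meet e (dot s f)"
  have gE: "g \<in> E" using E meetE dotE g_def by auto
  have 1: "g * s * f = g * s" using g_props(1) a xy g_def by blast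
  have 2: "meet g (dot g e) = g" using meet_dot_self[OF gE E(1)] meet_eq[OF gE E(1)]
    meet1[OF E(1) dotE[OF E(2)]] g_def by simp
  show ?thesis using xy 1 2 idem[OF gE] by (simp add: P_mult_def P_D_def g_def[symmetric])
qed

lemma ord: "(e, s) \<in> P \<Longrightarrow> (f, t) \<in> P \<Longrightarrow>
       (lr_le (P_mult meet dot) P_D (e, s) (f, t) \<longleftrightarrow> le_r e f \<and> s = e * t)"
proof -
  assume a: "(e, s) \<in> P" "(f, t) \<in> P"
  have E: "e \<in> E" "f \<in> E" using a Pmem by auto
  have "lr_le (P_mult meet dot) P_D (e, s) (f, t) \<longleftrightarrow> e = meet e f \<and> s = meet e f * e * t"
    using meet_dot_self[OF E] by (simp add: lr_le_def P_mult_def P_D_def)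
  also have "\<dots> \<longleftrightarrow> le_r e f \<and> s = e * t"
  proof
    assume h: "e = meet e f \<and> s = meet e f * e * t"
    have "e * f = e" using h meet2[OF E] by metis
    then show "le_r e f \<and> s = e * t" using h idem[OF E(1)] by (simp add: le_r_def)
  next
    assume h: "le_r e f \<and> s = e * t"
    then have "meet e f = e" using meet_eq[OF E] by (simp add: le_r_def)
    then show "e = meet e f \<and> s = meet e f * e * t" using h idem[OF E(1)] by simp
  qed
  finally show ?thesis .
qed

lemma main: "left_restriction_semigroup P (P_mult meet dot) P_D \<and>
    (\<forall>e s f t. (e, s) \<in> P \<longrightarrow> (f, t) \<in> P \<longrightarrow>
       (lr_le (P_mult meet dot) P_D (e, s) (f, t) \<longleftrightarrow> le_r e f \<and> s = e * t))"
  unfolding left_restriction_semigroup_def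
  using closed assoc Dx DDc DDy xDy ord
  by (auto simp: P_D_def Pmem idem)

end

theorem corollary3p8:
  fixes d :: "'a::semigroup_mult \<Rightarrow> 'a" and E :: "'a set"
    and meet :: "'a \<Rightarrow> 'a \<Rightarrow> 'a" and dot :: "'a \<Rightarrow> 'a \<Rightarrow> 'a"
  assumes "inductive_E_demigroup d E meet dot"
  shows "left_restriction_semigroup (CdE d E) (P_mult meet dot) P_D \<and>
    (\<forall>e s f t. (e, s) \<in> CdE d E \<longrightarrow> (f, t) \<in> CdE d E \<longrightarrow>
       (lr_le (P_mult meet dot) P_D (e, s) (f, t) \<longleftrightarrow> le_r e f \<and> s = e * t))"
proof -
  interpret indE d E meet dot using assms by unfold_locales
  show ?thesis using main by (simp add: P_def)
qed

end
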